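(* Let $\alpha=(S_g,\alpha_g)_{g\in\mathcal G}$ be a partial action of a connected groupoid $\mathcal G$ on a ring $S$. Let $y,z\in\mathcal G_0$ and let $\tau\in\mathcal G(y,z)$ be such that $S_{\tau^{-1}}=S_y$ and $S_{\tau}=S_z$. Then $S_g=S_{g\tau}$ for every $g\in\mathcal G$ with $s(g)=z$. In particular, if $\alpha$ is unital with $S_g=S1_g$ for central idempotents $1_g$, then $1_g=1_{g\tau}$ for every $g\in\mathcal G$ with $s(g)=z$.
   Context: A groupoid $\mathcal G$ is a small category in which every morphism is invertible; $\mathcal G_0$ denotes its set of objects, identified with the identity morphisms (so $\mathcal G_0\subseteq\mathcal G$). For $g\in\mathcal G$, $s(g)$ and $t(g)$ denote its source and target, $\mathcal G(x,y)=\{g\in\mathcal G: s(g)=x,\ t(g)=y\}$, and the product $gh$ is defined iff $s(g)=t(h)$. $\mathcal G$ is connected if $\mathcal G(x,y)\neq\emptyset$ for all $x,y\in\mathcal G_0$. Rings are associative, not necessarily unital. A partial action $\alpha=(S_g,\alpha_g)_{g\in\mathcal G}$ of $\mathcal G$ on a ring $S$ is a family such that: for each $g$, $S_{t(g)}$ is an ideal of $S$, $S_g$ is an ideal of $S_{t(g)}$, and $\alpha_g:S_{g^{-1}}\to S_g$ is a ring isomorphism; $\alpha_x=\mathrm{id}_{S_x}$ for $x\in\mathcal G_0$; and for all $g,h$ with $s(g)=t(h)$, $\alpha_h^{-1}(S_{g^{-1}}\cap S_h)\subseteq S_{(gh)^{-1}}$ and $\alpha_g(\alpha_h(a))=\alpha_{gh}(a)$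 for all $a\in\alpha_h^{-1}(S_{g^{-1}}\cap S_h)$. The partial action is unital if each $S_g$ is a unital ring, i.e. $S_g=S1_g$ for a central idempotent $1_g$ of $S$. *)

theory Defs
  imports Main
begin

text \<open>A groupoid is given by its set of morphisms G, its set of objects G0 (identified
with identity morphisms, G0 \<subseteq> G), source s, target t, a composition mult
(mult g h = gh, meaningful iff s g = t h) and inversion iv.\<close>

definition groupoid ::
  "'g set \<Rightarrow> 'g set \<Rightarrow> ('g \<Rightarrow> 'g) \<Rightarrow> ('g \<Rightarrow> 'g) \<Rightarrow> ('g \<Rightarrow> 'g \<Rightarrow> 'g) \<Rightarrow> ('g \<Rightarrow> 'g) \<Rightarrow> bool" where
  "groupoid G G0 s t mult iv \<longleftrightarrow>
     G0 \<subseteq> G \<and>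
     (\<forall>g\<in>G. s g \<in> G0 \<and> t g \<in> G0) \<and>
     (\<forall>x\<in>G0. s x = x \<and> t x = x) \<and>
     (\<forall>g\<in>G. \<forall>h\<in>G. s g = t h \<longrightarrow>
        mult g h \<in> G \<and> s (mult g h) = s h \<and> t (mult g h) = t g) \<and>
     (\<forall>f\<in>G. \<forall>g\<in>G. \<forall>h\<in>G. s f = t g \<and> s g = t h \<longrightarrow>
        mult (mult f g) h = mult f (mult g h)) \<and>
     (\<forall>g\<in>G. mult g (s g) = g \<and> mult (t g) g = g) \<and>
     (\<forall>g\<in>G. iv g \<in> G \<and> s (iv g) = t g \<and> t (iv g) = s g \<and>
        mult g (iv g) = t g \<and> mult (iv g) g = s g)"

definition connected_groupoid ::
  "'g set \<Rightarrow> 'g set \<Rightarrow> ('g \<Rightarrow> 'g) \<Rightarrow> ('g \<Rightarrow> 'g) \<Rightarrow> bool" where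
  "connected_groupoid G G0 s t \<longleftrightarrow> (\<forall>x\<in>G0. \<forall>y\<in>G0. \<exists>g\<in>G. s g = x \<and> t g = y)"

definition ideal_of :: "'r::ring set \<Rightarrow> 'r set \<Rightarrow> bool" where
  "ideal_of I R \<longleftrightarrow> I \<subseteq> R \<and> 0 \<in> I \<and> (\<forall>a\<in>I. \<forall>b\<in>I. a - b \<in> I) \<and>
     (\<forall>r\<in>R. \<forall>a\<in>I. r * a \<in> I \<and> a * r \<in> I)"

definition ring_iso_on :: "('r::ring \<Rightarrow> 'r) \<Rightarrow> 'r set \<Rightarrow> 'r set \<Rightarrow> bool" where
  "ring_iso_on f A B \<longleftrightarrow> bij_betw f A B \<and>
     (\<forall>a\<in>A. \<forall>b\<in>A. f (a + b) = f a + f b \<and> f (a * b) = f a * f b)"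

definition partial_action ::
  "'g set \<Rightarrow> 'g set \<Rightarrow> ('g \<Rightarrow> 'g) \<Rightarrow> ('g \<Rightarrow> 'g) \<Rightarrow> ('g \<Rightarrow> 'g \<Rightarrow> 'g) \<Rightarrow> ('g \<Rightarrow> 'g)
    \<Rightarrow> ('g \<Rightarrow> 'r::ring set) \<Rightarrow> ('g \<Rightarrow> 'r \<Rightarrow> 'r) \<Rightarrow> bool" where
  "partial_action G G0 s t mult iv Sd act \<longleftrightarrow>
     (\<forall>g\<in>G. ideal_of (Sd (t g)) UNIV \<and> ideal_of (Sd g) (Sd (t g)) \<and>
        ring_iso_on (act g) (Sd (iv g)) (Sd g)) \<and>
     (\<forall>x\<in>G0. \<forall>a\<in>Sd x. act x a = a) \<and>
     (\<forall>g\<in>G. \<forall>h\<in>G. s g = t h \<longrightarrow>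
        (\<forall>a\<in>Sd (iv h). act h a \<in> Sd (iv g) \<inter> Sd h \<longrightarrow>
           a \<in> Sd (iv (mult g h)) \<and> act g (act h a) = act (mult g h) a))"

definition unital_with ::
  "'g set \<Rightarrow> ('g \<Rightarrow> 'r::ring set) \<Rightarrow> ('g \<Rightarrow> 'r) \<Rightarrow> bool" where
  "unital_with G Sd one \<longleftrightarrow>
     (\<forall>g\<in>G. one g * one g = one g \<and> (\<forall>a. one g * a = a * one g) \<and>
        Sd g = {a * one g | a. True})"

end

theory Submission
  imports Defs
begin

lemma ivv:
  assumes "groupoid G G0 s t mult iv" "g \<in> G"
  shows "iv (iv g) = g"
proof -
  note gr = assms(1)[unfolded groupoid_def]
  have gI: "iv g \<in> G" "s (iv g) = t g" "t (iv g) = s g" "mult g (iv g) = t g" "mult (iv g) g = s g"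
    if "g \<in> G" for g using gr that by blast+
  have gA: "mult (mult f g) h = mult f (mult g h)"
    if "f \<in> G" "g \<in> G" "h \<in> G" "s f = t g" "s g = t h" for f g h using gr that by blast
  have gU: "mult g (s g) = g" "mult (t g) g = g" if "g \<in> G" for g using gr that by blast+
  have i1: "iv g \<in> G" "s (iv g) = t g" "t (iv g) = s g" "mult (iv g) g = s g" using gI assms(2) by auto
  have i2: "iv (iv g) \<in> G" "s (iv (iv g)) = s g" "mult (iv (iv g)) (iv g) = t g"
    using gI[OF i1(1)] i1 by auto
  have "iv (iv g) = mult (iv (iv g)) (s (iv (iv g)))" using gU(1)[OF i2(1)] by simp
  also have "\<dots> = mult (iv (iv g)) (mult (iv g) g)" using i1 i2 by simp
  also have "\<dots> = mult (mult (iv (iv g)) (iv g)) g" using gA[OF i2(1) i1(1) assms(2)] i1 i2 gI[OF i1(1)] by simp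
  also have "\<dots> = mult (t g) g" using i2 by simp
  also have "\<dots> = g" using gU assms(2) by simp
  finally show ?thesis .
qed

theorem proposition2p6:
  fixes G G0 :: "'g set" and s t iv :: "'g \<Rightarrow> 'g" and mult :: "'g \<Rightarrow> 'g \<Rightarrow> 'g"
    and Sd :: "'g \<Rightarrow> 'r::ring set" and act :: "'g \<Rightarrow> 'r \<Rightarrow> 'r"
    and y z \<tau> :: 'g
  assumes "groupoid G G0 s t mult iv"
    and "connected_groupoid G G0 s t"
    and "partial_action G G0 s t mult iv Sd act"
    and "y \<in> G0" and "z \<in> G0"
    and "\<tau> \<in> G" and "s \<tau> = y" and "t \<tau> = z"
    and "Sd (iv \<tau>) = Sd y" and "Sd \<tau> = Sd z"
  shows "(\<forall>g\<in>G. s g = z \<longrightarrow> Sd g = Sd (mult g \<tau>)) \<and>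
         (\<forall>one. unital_with G Sd one \<longrightarrow>
            (\<forall>g\<in>G. s g = z \<longrightarrow> one g = one (mult g \<tau>)))"
proof -
  note gr = assms(1)[unfolded groupoid_def]
  have gM: "mult g h \<in> G" "s (mult g h) = s h" "t (mult g h) = t g"
    if "g \<in> G" "h \<in> G" "s g = t h" for g h using gr that by blast+
  have gI: "iv g \<in> G" "s (iv g) = t g" "t (iv g) = s g" "mult g (iv g) = t g" "mult (iv g) g = s g"
    if "g \<in> G" for g using gr that by blast+
  have gA: "mult (mult f g) h = mult f (mult g h)"
    if "f \<in> G" "g \<in> G" "h \<in> G" "s f = t g" "s g = t h" for f g h using gr that by blast
  have gU: "mult g (s g) = g" "mult (t g) g = g" if "g \<in> G" for g using gr that by blast+
  note pa = assms(3)[unfolded partial_action_def]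
  have sub: "Sd h \<subseteq> Sd (t h)" if "h \<in> G" for h
    using pa that unfolding ideal_of_def by blast
  have img: "act h ` Sd (iv h) = Sd h" if "h \<in> G" for h
  proof -
    have "ring_iso_on (act h) (Sd (iv h)) (Sd h)" using pa that by blast
    thus ?thesis unfolding ring_iso_on_def bij_betw_def by blast
  qed
  have into: "act h a \<in> Sd h" if "h \<in> G" "a \<in> Sd (iv h)" for h a
    using img[OF that(1)] that(2) by blast
  have onto: "\<exists>a\<in>Sd (iv h). act h a = b" if "h \<in> G" "b \<in> Sd h" for h b
    using img[OF that(1)] that(2) by (metis imageE)
  have comp: "a \<in> Sd (iv (mult g h)) \<and> act g (act h a) = act (mult g h) a"
    if "g \<in> G" "h \<in> G" "s g = t h" "a \<in> Sd (iv h)" "act h a \<in> Sd (iv g)" "act h a \<in> Sd h" for g h a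
    using pa that by blast
  have ivt: "iv \<tau> \<in> G" "s (iv \<tau>) = z" "t (iv \<tau>) = y" "mult (iv \<tau>) \<tau> = y"
    "mult \<tau> (iv \<tau>) = z"
    using gI[OF assms(6)] assms by auto
  have ivvt: "iv (iv \<tau>) = \<tau>" using ivv[OF assms(1,6)] .
  have idy: "act y a = a" if "a \<in> Sd y" for a using pa assms(4) that by blast
  have part1: "Sd g = Sd (mult g \<tau>)" if g: "g \<in> G" "s g = z" for g
  proof
    have gt: "mult g \<tau> \<in> G" "s (mult g \<tau>) = y" "t (mult g \<tau>) = t g"
      using gM[OF g(1) assms(6)] g assms by auto
    have ig: "iv g \<in> G" "t (iv g) = z" "s (iv g) = t g" using gI[OF g(1)] g by auto
    show "Sd g \<subseteq> Sd (mult g \<tau>)"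
    proof
      fix b assume b: "b \<in> Sd g"
      obtain a' where a': "a' \<in> Sd (iv g)" "act g a' = b" using onto[OF g(1) b] by blast
      have "a' \<in> Sd z" using sub[OF ig(1)] a' ig by auto
      hence "a' \<in> Sd \<tau>" using assms by simp
      then obtain a where a: "a \<in> Sd (iv \<tau>)" "act \<tau> a = a'" using onto[OF assms(6)] by blast
      have "a \<in> Sd (iv (mult g \<tau>)) \<and> act g (act \<tau> a) = act (mult g \<tau>) a"
        using comp[OF g(1) assms(6)] g assms a a' \<open>a' \<in> Sd \<tau>\<close> by auto
      thus "b \<in> Sd (mult g \<tau>)" using into[OF gt(1)] a a' by metis
    qed
    show "Sd (mult g \<tau>) \<subseteq> Sd g"
    proof
      fix b assume b: "b \<in> Sd (mult g \<tau>)"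
      obtain a where a: "a \<in> Sd (iv (mult g \<tau>))" "act (mult g \<tau>) a = b" using onto[OF gt(1) b] by blast
      have igt: "iv (mult g \<tau>) \<in> G" "t (iv (mult g \<tau>)) = y" using gI[OF gt(1)] gt by auto
      have ay: "a \<in> Sd y" using sub[OF igt(1)] a igt by auto
      hence at: "a \<in> Sd (iv \<tau>)" using assms by simp
      define c where "c = act \<tau> a"
      have cS: "c \<in> Sd \<tau>" using into[OF assms(6) at] c_def by simp
      have "a \<in> Sd (iv (mult (iv \<tau>) \<tau>)) \<and> act (iv \<tau>) (act \<tau> a) = act (mult (iv \<tau>) \<tau>) a"
        using comp[OF ivt(1) assms(6)] ivt(2) assms(8) at cS ivvt c_def by simp
      hence "act (iv \<tau>) c = a" using ivt idy ay c_def by simp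
      hence "c \<in> Sd (iv (mult (mult g \<tau>) (iv \<tau>))) \<and> act (mult g \<tau>) (act (iv \<tau>) c) = act (mult (mult g \<tau>) (iv \<tau>)) c"
        using comp[OF gt(1) ivt(1)] ivt gt ivvt cS a at by auto
      moreover have "mult (mult g \<tau>) (iv \<tau>) = g"
      proof -
        have "mult (mult g \<tau>) (iv \<tau>) = mult g (mult \<tau> (iv \<tau>))" using gA[OF g(1) assms(6) ivt(1)] g assms ivt by auto
        also have "\<dots> = g" using ivt gU[OF g(1)] g by simp
        finally show ?thesis .
      qed
      ultimately have cg: "c \<in> Sd (iv g)" by simp
      have "act (mult g \<tau>) a = act g c"
        using comp[OF g(1) assms(6)] g assms at cS cg c_def by auto
      thus "b \<in> Sd g" using into[OF g(1) cg] a by simp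
    qed
  qed
  have part2: "one g = one (mult g \<tau>)" if u: "unital_with G Sd one" and g: "g \<in> G" "s g = z" for one g
  proof -
    have gt: "mult g \<tau> \<in> G" using gM[OF g(1) assms(6)] g assms by auto
    have eq: "Sd g = Sd (mult g \<tau>)" using part1 g by blast
    have U: "one h * one h = one h" "\<And>a. one h * a = a * one h" "Sd h = {a * one h | a. True}"
      if "h \<in> G" for h using u that unfolding unital_with_def by blast+
    have key: "one h * one k = one h" if hk: "h \<in> G" "k \<in> G" "Sd h = Sd k" for h k
    proof -
      have "one h * one h \<in> Sd h" using U(3)[OF hk(1)] by blast
      hence "one h \<in> Sd h" using U(1)[OF hk(1)] by simp
      hence "one h \<in> Sd k" using hk(3) by simp
      then obtain a where ah: "one h = a * one k" using U(3)[OF hk(2)] by blast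
      hence "one h * one k = a * (one k * one k)" by (simp add: mult.assoc)
      also have "\<dots> = one h" using U(1)[OF hk(2)] ah by simp
      finally show ?thesis .
    qed
    have "one g * one (mult g \<tau>) = one g" using key[OF g(1) gt eq] .
    moreover have "one (mult g \<tau>) * one g = one (mult g \<tau>)" using key[OF gt g(1)] eq by simp
    moreover have "one g * one (mult g \<tau>) = one (mult g \<tau>) * one g" using U(2)[OF g(1)] by blast
    ultimately show ?thesis by simp
  qed
  show ?thesis using part1 part2 by blast
qed

end
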